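(* Let $V_\mathbb{C}$ be a complex vector space of dimension $d\ge7$ with a non-degenerate quadratic form $q$, and identify $\mathfrak{so}(V_\mathbb{C},q)$ with $\Lambda^2V_\mathbb{C}$. For $i=1,2$ let $L_i\subset V_\mathbb{C}$ be a 1-dimensional subspace and $0\ne u_i\in L_i^\perp$ with $q(u_i)=0$ and $\dim(L_i+\mathbb{C}u_i)=2$, and set $\mathfrak{r}(L_i,u_i)=u_i\wedge(L_i+\mathbb{C}u_i)^\perp$. If $\mathfrak{h}_\mathbb{C}\subset\mathfrak{so}(V_\mathbb{C},q)$ is a Lie subalgebra containing $\mathfrak{r}(L_1,u_1)$ and $\mathfrak{r}(L_2,u_2)$, then $u_1\wedge u_2\in\mathfrak{h}_\mathbb{C}$.
   Context: The identification $\Lambda^2V_\mathbb{C}\cong\mathfrak{so}(V_\mathbb{C},q)$ sends $v\wedge w$ to the endomorphism $x\mapsto q(x,w)v-q(x,v)w$; orthogonal complements are with respect to $q$. *)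

theory Defs
  imports "HOL-Analysis.Analysis"
begin

text \<open>The complex vector space V_C is complex^'n (dimension CARD('n)).
  The quadratic form q is given by its symmetric Gram matrix Q; its polar
  (symmetric bilinear) form is qf Q, and q(x) = qf Q x x.\<close>

definition qf :: "complex^'n^'n \<Rightarrow> complex^'n \<Rightarrow> complex^'n \<Rightarrow> complex" where
  "qf Q x y = (\<Sum>i\<in>UNIV. \<Sum>j\<in>UNIV. x$i * Q$i$j * y$j)"

definition nondegenerate :: "complex^'n^'n \<Rightarrow> bool" where
  "nondegenerate Q \<longleftrightarrow> transpose Q = Q \<and> (\<forall>x. (\<forall>y. qf Q x y = 0) \<longrightarrow> x = 0)"

definition so_alg :: "complex^'n^'n \<Rightarrow> (complex^'n^'n) set" where
  "so_alg Q = {A. \<forall>x y. qf Q (A *v x) y + qf Q x (A *v y) = 0}"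

text \<open>v \<wedge> w is the endomorphism x \<mapsto> q(x,w) v - q(x,v) w.\<close>
definition wedge :: "complex^'n^'n \<Rightarrow> complex^'n \<Rightarrow> complex^'n \<Rightarrow> complex^'n^'n" where
  "wedge Q v w = (\<chi> i k. v$i * (\<Sum>j\<in>UNIV. Q$k$j * w$j) - w$i * (\<Sum>j\<in>UNIV. Q$k$j * v$j))"


definition perp :: "complex^'n^'n \<Rightarrow> (complex^'n) set \<Rightarrow> (complex^'n) set" where
  "perp Q S = {w. \<forall>s\<in>S. qf Q s w = 0}"

definition cline :: "complex^'n \<Rightarrow> (complex^'n) set" where
  "cline v = {c *s v | c. True}"

definition set_plus_vec :: "(complex^'n) set \<Rightarrow> (complex^'n) set \<Rightarrow> (complex^'n) set" where
  "set_plus_vec A B = {a + b | a b. a \<in> A \<and> b \<in> B}"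

definition is_line :: "(complex^'n) set \<Rightarrow> bool" where
  "is_line L \<longleftrightarrow> (\<exists>l. l \<noteq> 0 \<and> L = cline l)"

text \<open>dim (L + C u) = 2, for L = C l: l, u linearly independent over C.\<close>
definition cindep2 :: "complex^'n \<Rightarrow> complex^'n \<Rightarrow> bool" where
  "cindep2 a b \<longleftrightarrow> (\<forall>s t. s *s a + t *s b = 0 \<longrightarrow> s = 0 \<and> t = 0)"

definition dim_is_2 :: "(complex^'n) set \<Rightarrow> bool" where
  "dim_is_2 W \<longleftrightarrow> (\<exists>a b. cindep2 a b \<and> W = set_plus_vec (cline a) (cline b))"

definition r_alg :: "complex^'n^'n \<Rightarrow> (complex^'n) set \<Rightarrow> complex^'n \<Rightarrow> (complex^'n^'n) set" where
  "r_alg Q L u = {wedge Q u w | w. w \<in> perp Q (set_plus_vec L (cline u))}"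

definition lie_subalg :: "complex^'n^'n \<Rightarrow> (complex^'n^'n) set \<Rightarrow> bool" where
  "lie_subalg Q H \<longleftrightarrow> H \<subseteq> so_alg Q \<and> 0 \<in> H \<and>
     (\<forall>A\<in>H. \<forall>B\<in>H. A + B \<in> H) \<and> (\<forall>c. \<forall>A\<in>H. (\<chi> i j. c * A$i$j) \<in> H) \<and>
     (\<forall>A\<in>H. \<forall>B\<in>H. A ** B - B ** A \<in> H)"

end

theory Submission
  imports Defs
begin

lemma qf_alt: "qf Q x y = (\<Sum>i\<in>UNIV. x$i * (Q *v y)$i)"
  by (simp add: qf_def matrix_vector_mult_def sum_distrib_left mult.assoc)

lemma qf_add_left: "qf Q (x + y) z = qf Q x z + qf Q y z"
  by (simp add: qf_alt distrib_right sum.distrib)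

lemma qf_scale_left: "qf Q (c *s x) z = c * qf Q x z"
  by (simp add: qf_alt sum_distrib_left mult.assoc)

lemma qf_add_right: "qf Q x (y + z) = qf Q x y + qf Q x z"
  by (simp add: qf_def distrib_left sum.distrib)

lemma qf_scale_right: "qf Q x (c *s y) = c * qf Q x y"
  by (simp add: qf_def sum_distrib_left mult_ac)

lemma qf_diff_right: "qf Q x (y - z) = qf Q x y - qf Q x z"
  by (simp add: qf_def right_diff_distrib sum_subtractf)

lemma qf_sym:
  assumes "transpose Q = Q"
  shows "qf Q x y = qf Q y x"
proof -
  have Qs: "Q$i$j = Q$j$i" for i j
  proof -
    have "(transpose Q)$i$j = Q$j$i" by (simp add: transpose_def)
    then show ?thesis using assms by simp
  qed
  show ?thesis unfolding qf_def
    by (subst sum.swap) (simp add: Qs mult.commute mult.left_commute)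
qed

lemma qf_zero_right [simp]: "qf Q x 0 = 0"
  by (simp add: qf_def)

lemma qf_zero_left [simp]: "qf Q 0 y = 0"
  by (simp add: qf_def)

lemma perp_subspace: "vec.subspace (perp Q X)"
  unfolding vec.subspace_def perp_def by (simp add: qf_add_right qf_scale_right)

lemma perp_anti: "X \<subseteq> Y \<Longrightarrow> perp Q Y \<subseteq> perp Q X"
  by (auto simp: perp_def)

lemma perp_span: "perp Q (vec.span X) = perp Q X"
proof
  show "perp Q (vec.span X) \<subseteq> perp Q X" by (rule perp_anti) (rule vec.span_superset)
  show "perp Q X \<subseteq> perp Q (vec.span X)"
  proof
    fix w assume w: "w \<in> perp Q X"
    have sub: "vec.subspace {s. qf Q s w = 0}"
      unfolding vec.subspace_def by (simp add: qf_add_left qf_scale_left)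
    have "X \<subseteq> {s. qf Q s w = 0}" using w by (auto simp: perp_def)
    hence "vec.span X \<subseteq> {s. qf Q s w = 0}" using vec.span_minimal sub by blast
    thus "w \<in> perp Q (vec.span X)" by (auto simp: perp_def)
  qed
qed

lemma hyper:
  assumes S: "vec.subspace S"
  shows "vec.dim S \<le> vec.dim (S \<inter> {w. qf Q a w = 0}) + 1"
proof (cases "\<forall>x\<in>S. qf Q a x = 0")
  case True
  then have "S \<inter> {w. qf Q a w = 0} = S" by auto
  then show ?thesis by simp
next
  case False
  then obtain v where v: "v \<in> S" "qf Q a v \<noteq> 0" by auto
  let ?K = "S \<inter> {w. qf Q a w = 0}"
  have "S \<subseteq> vec.span (insert v ?K)"
  proof
    fix x assume x: "x \<in> S"
    let ?t = "qf Q a x / qf Q a v"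
    have m: "x - ?t *s v \<in> S"
      using x v S by (simp add: vec.subspace_diff vec.subspace_scale)
    have "qf Q a (x - ?t *s v) = 0"
      using v(2) by (simp add: qf_diff_right qf_scale_right)
    with m have "x - ?t *s v \<in> ?K" by simp
    then have "x - ?t *s v \<in> vec.span ?K" by (rule vec.span_base)
    then show "x \<in> vec.span (insert v ?K)" unfolding vec.span_insert by blast
  qed
  then have "vec.dim S \<le> vec.dim (insert v ?K)" by (rule vec.dim_mono)
  also have "\<dots> \<le> vec.dim ?K + 1" by (simp add: vec.dim_insert)
  finally show ?thesis .
qed

lemma LB:
  assumes "finite F" and S: "vec.subspace S"
  shows "vec.dim S \<le> vec.dim (S \<inter> perp Q F) + card F"
  using assms(1)
proof (induction F rule: finite_induct)
  case empty
  have "S \<inter> perp Q {} = S" by (auto simp: perp_def)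
  then show ?case by simp
next
  case (insert a F)
  have sub: "vec.subspace (S \<inter> perp Q F)"
    using S perp_subspace by (rule vec.subspace_inter)
  have "vec.dim (S \<inter> perp Q F) \<le> vec.dim ((S \<inter> perp Q F) \<inter> {w. qf Q a w = 0}) + 1"
    by (rule hyper[OF sub])
  moreover have "(S \<inter> perp Q F) \<inter> {w. qf Q a w = 0} = S \<inter> perp Q (insert a F)"
    by (auto simp: perp_def)
  ultimately show ?case using insert by simp
qed

lemma LB_univ:
  assumes "finite F"
  shows "CARD('n) \<le> vec.dim (perp Q F :: (complex^'n) set) + card F"
proof -
  have "vec.dim (UNIV::(complex^'n) set) \<le> vec.dim (UNIV \<inter> perp Q F) + card F"
    by (rule LB[OF assms vec.subspace_UNIV])
  moreover have "vec.dim (UNIV::(complex^'n) set) = CARD('n)" by (rule vec_dim_card)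
  ultimately show ?thesis by simp
qed

lemma perp_UNIV:
  assumes nd: "nondegenerate Q"
  shows "perp Q UNIV = {0}"
proof
  show "perp Q UNIV \<subseteq> {0}"
  proof
    fix w assume "w \<in> perp Q UNIV"
    then have "\<forall>y. qf Q w y = 0"
      using nd qf_sym[of Q w] unfolding perp_def nondegenerate_def by auto
    then show "w \<in> {0}" using nd unfolding nondegenerate_def by blast
  qed
  show "{0} \<subseteq> perp Q UNIV" by (auto simp: perp_def qf_def)
qed

lemma UB:
  fixes P :: "(complex^'n) set"
  assumes nd: "nondegenerate Q" and ind: "vec.independent P"
  shows "vec.dim (perp Q P) + card P \<le> CARD('n)"
proof -
  obtain C where C: "P \<subseteq> C" "vec.independent C" "UNIV \<subseteq> vec.span C"
    using vec.maximal_independent_subset_extend[of P UNIV] ind by auto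
  have fC: "finite C" using C(2) by (rule vec.finiteI_independent)
  have "card C = vec.dim (UNIV::(complex^'n) set)" using vec.basis_card_eq_dim[of C UNIV] C by auto
  also have "\<dots> = CARD('n)" by (rule vec_dim_card)
  finally have cC: "card C = CARD('n)" .
  have fP: "finite P" using fC C(1) finite_subset by blast
  let ?Z = "perp Q P" let ?T = "perp Q (C - P)"
  have T: "CARD('n) \<le> vec.dim ?T + card (C - P)" using LB_univ[of "C - P" Q] fC by simp
  have cd: "card (C - P) = card C - card P" using card_Diff_subset fP C(1) by blast
  have sC: "vec.span C = UNIV" using C(3) by auto
  have "?Z \<inter> ?T = perp Q C" using C(1) by (auto simp: perp_def)
  also have "\<dots> = perp Q (vec.span C)" by (simp add: perp_span)
  also have "\<dots> = {0}" using sC perp_UNIV nd by simp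
  finally have ZT: "?Z \<inter> ?T = {0}" .
  have "vec.dim {x + y |x y. x \<in> ?Z \<and> y \<in> ?T} + vec.dim (?Z \<inter> ?T) = vec.dim ?Z + vec.dim ?T"
    by (rule vec.dim_sums_Int) (rule perp_subspace)+
  moreover have "vec.dim {x + y |x y. x \<in> ?Z \<and> y \<in> ?T} \<le> CARD('n)"
    by (rule dim_subset_UNIV_cart_gen)
  moreover have "vec.dim (?Z \<inter> ?T) = 0" using ZT by simp
  moreover have "card P \<le> card C" using card_mono fC C(1) by blast
  ultimately show ?thesis using T cd cC by linarith
qed

lemma UB_set:
  fixes Y :: "(complex^'n) set"
  assumes nd: "nondegenerate Q"
  shows "vec.dim (perp Q Y) + vec.dim Y \<le> CARD('n)"
proof -
  obtain B where B: "B \<subseteq> Y" "vec.independent B" "Y \<subseteq> vec.span B" "card B = vec.dim Y"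
    using vec.basis_exists by blast
  have "perp Q Y \<subseteq> perp Q B" using B(1) by (rule perp_anti)
  moreover have "perp Q B \<subseteq> perp Q Y"
    using perp_anti[OF B(3), of Q] by (simp add: perp_span)
  ultimately have "perp Q Y = perp Q B" by blast
  then show ?thesis using UB[OF nd B(2)] B(4) by simp
qed

lemma card3: "card {a,b,c} \<le> 3"
  by (auto simp: card_insert_if)

lemma card4: "card {a,b,c,e} \<le> 4"
  by (auto simp: card_insert_if)

lemma wedge_alt: "wedge Q v w = (\<chi> i k. v$i * (Q *v w)$k - w$i * (Q *v v)$k)"
  by (simp add: wedge_def matrix_vector_mult_def)

lemma wedge_mult_entry:
  "(\<Sum>j\<in>UNIV. (a$i * (Q *v b)$j - b$i * (Q *v a)$j) * (c$j * (Q *v d)$k - d$j * (Q *v c)$k))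
   = qf Q c b * a$i * (Q*v d)$k - qf Q d b * a$i * (Q*v c)$k - qf Q c a * b$i * (Q*v d)$k
     + qf Q d a * b$i * (Q*v c)$k"
proof -
  have "(\<Sum>j\<in>UNIV. (a$i * (Q *v b)$j - b$i * (Q *v a)$j) * (c$j * (Q *v d)$k - d$j * (Q *v c)$k))
     = (\<Sum>j\<in>UNIV. (a$i * (Q*v d)$k) * (c$j * (Q*v b)$j) - (a$i * (Q*v c)$k) * (d$j * (Q*v b)$j)
         - (b$i*(Q*v d)$k) * (c$j*(Q*v a)$j) + (b$i*(Q*v c)$k) * (d$j*(Q*v a)$j))"
    by (rule sum.cong) (simp_all add: algebra_simps)
  also have "\<dots> = (a$i * (Q*v d)$k) * qf Q c b - (a$i * (Q*v c)$k) * qf Q d b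
         - (b$i*(Q*v d)$k) * qf Q c a + (b$i*(Q*v c)$k) * qf Q d a"
    by (simp only: qf_alt sum.distrib sum_subtractf sum_distrib_left)
  finally show ?thesis by (simp add: algebra_simps)
qed

lemma wedge_mult:
  "wedge Q a b ** wedge Q c d = (\<chi> i k. qf Q c b * a$i * (Q*v d)$k - qf Q d b * a$i * (Q*v c)$k
     - qf Q c a * b$i * (Q*v d)$k + qf Q d a * b$i * (Q*v c)$k)"
  unfolding wedge_alt matrix_matrix_mult_def
  by (simp add: vec_eq_iff wedge_mult_entry)

lemma ring_step:
  fixes s c p y q t r x r' z :: complex
  shows "(0 * p * x - s * p * y - c * r * x + 0 * r * y') - (0 * q * z - s * q * t - c * r' * z + 0 * r' * t')
    = (- s) * (p * y - q * t) - c * (r * x - r' * z)"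
  by (simp add: algebra_simps)

lemma bracket:
  assumes sym: "transpose Q = Q" and h1: "qf Q w u2 = 0" and h2: "qf Q u1 w' = 0"
    and h3: "qf Q u1 u2 = 0 \<or> w = w'"
  shows "wedge Q u1 w ** wedge Q u2 w' - wedge Q u2 w' ** wedge Q u1 w
         = (\<chi> i j. (- qf Q w w') * wedge Q u1 u2 $ i $ j)"
proof -
  have e1: "qf Q u2 w = 0" using h1 qf_sym[OF sym, of u2 w] by simp
  have e2: "qf Q w' u1 = 0" using h2 qf_sym[OF sym, of w' u1] by simp
  have e3: "qf Q w' w = qf Q w w'" by (rule qf_sym[OF sym])
  have e4: "qf Q u2 u1 = qf Q u1 u2" by (rule qf_sym[OF sym])
  have ent: "(wedge Q u1 w ** wedge Q u2 w' - wedge Q u2 w' ** wedge Q u1 w)$i$k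
      = (- qf Q w w') * (wedge Q u1 u2 $ i $ k)" for i k
  proof -
    have z: "qf Q u1 u2 * (w$i * (Q*v w')$k - w'$i*(Q*v w)$k) = 0"
      using h3 by (elim disjE) (simp only: mult_zero_left, simp only: diff_self mult_zero_right)
    have "(wedge Q u1 w ** wedge Q u2 w' - wedge Q u2 w' ** wedge Q u1 w)$i$k
      = (0 * u1$i * (Q*v w')$k - qf Q w w' * u1$i * (Q*v u2)$k
     - qf Q u1 u2 * w$i * (Q*v w')$k + 0 * w$i * (Q*v u2)$k)
      - (0 * u2$i * (Q*v w)$k - qf Q w w' * u2$i * (Q*v u1)$k
     - qf Q u1 u2 * w'$i * (Q*v w)$k + 0 * w'$i * (Q*v u1)$k)"
      by (simp only: wedge_mult vector_minus_component vec_lambda_beta e1 e2 e3 e4 h1 h2)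
    also have "\<dots> = (- qf Q w w') * (u1$i * (Q*v u2)$k - u2$i * (Q*v u1)$k)
        - qf Q u1 u2 * (w$i * (Q*v w')$k - w'$i*(Q*v w)$k)"
      by (rule ring_step)
    also have "\<dots> = (- qf Q w w') * (wedge Q u1 u2 $ i $ k)"
      by (simp only: z diff_zero wedge_alt vec_lambda_beta)
    finally show ?thesis .
  qed
  show ?thesis
  proof (rule iffD2[OF vec_eq_iff], rule allI, rule iffD2[OF vec_eq_iff], rule allI)
    fix i k
    show "(wedge Q u1 w ** wedge Q u2 w' - wedge Q u2 w' ** wedge Q u1 w)$i$k
      = (\<chi> i j. (- qf Q w w') * wedge Q u1 u2 $ i $ j)$i$k"
      unfolding vec_lambda_beta by (rule ent)
  qed
qed

lemma perpI: "(\<And>s. s \<in> S \<Longrightarrow> qf Q s w = 0) \<Longrightarrow> w \<in> perp Q S"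
  by (simp add: perp_def)

lemma perpD: "w \<in> perp Q S \<Longrightarrow> s \<in> S \<Longrightarrow> qf Q s w = 0"
  by (simp add: perp_def)

theorem lemma5p6:
  fixes Q :: "complex^'n^'n" and L1 L2 :: "(complex^'n) set" and u1 u2 :: "complex^'n"
    and H :: "(complex^'n^'n) set"
  assumes "CARD('n) \<ge> 7"
    and "nondegenerate Q"
    and "is_line L1" and "is_line L2"
    and "u1 \<noteq> 0" and "u1 \<in> perp Q L1" and "qf Q u1 u1 = 0"
    and "dim_is_2 (set_plus_vec L1 (cline u1))"
    and "u2 \<noteq> 0" and "u2 \<in> perp Q L2" and "qf Q u2 u2 = 0"
    and "dim_is_2 (set_plus_vec L2 (cline u2))"
    and "lie_subalg Q H"
    and "r_alg Q L1 u1 \<subseteq> H" and "r_alg Q L2 u2 \<subseteq> H"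
  shows "wedge Q u1 u2 \<in> H"
proof -
  have nd: "nondegenerate Q" by (rule assms(2))
  have sym: "transpose Q = Q" using assms(2) by (simp add: nondegenerate_def)
  note qs = qf_sym[OF sym]
  obtain l1 where l1: "L1 = cline l1" using assms(3) unfolding is_line_def by blast
  obtain l2 where l2: "L2 = cline l2" using assms(4) unfolding is_line_def by blast
  have H: "lie_subalg Q H" by (rule assms(13))
  have final: "wedge Q u1 u2 \<in> H"
    if w: "w \<in> perp Q {l1,u1,u2}" and w': "w' \<in> perp Q {l2,u1,u2}"
      and h3: "qf Q u1 u2 = 0 \<or> w = w'" and nz: "qf Q w w' \<noteq> 0" for w w'
  proof -
    have wl1: "qf Q l1 w = 0" "qf Q u1 w = 0" "qf Q u2 w = 0" using w by (auto simp: perp_def)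
    have wl2: "qf Q l2 w' = 0" "qf Q u1 w' = 0" "qf Q u2 w' = 0" using w' by (auto simp: perp_def)
    have "w \<in> perp Q (set_plus_vec L1 (cline u1))"
      unfolding perp_def set_plus_vec_def l1 cline_def using wl1
      by (auto simp: qf_add_left qf_scale_left)
    then have A: "wedge Q u1 w \<in> H" using assms(14) unfolding r_alg_def by blast
    have "w' \<in> perp Q (set_plus_vec L2 (cline u2))"
      unfolding perp_def set_plus_vec_def l2 cline_def using wl2
      by (auto simp: qf_add_left qf_scale_left)
    then have B: "wedge Q u2 w' \<in> H" using assms(15) unfolding r_alg_def by blast
    have "wedge Q u1 w ** wedge Q u2 w' - wedge Q u2 w' ** wedge Q u1 w \<in> H"
      using H A B unfolding lie_subalg_def by blast
    moreover have h1: "qf Q w u2 = 0" using wl1(3) qs[of w u2] by simp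
    have "wedge Q u1 w ** wedge Q u2 w' - wedge Q u2 w' ** wedge Q u1 w
        = (\<chi> i j. (- qf Q w w') * wedge Q u1 u2 $ i $ j)"
      by (rule bracket[OF sym h1 wl2(2) h3])
    ultimately have M: "(\<chi> i j. (- qf Q w w') * wedge Q u1 u2 $ i $ j) \<in> H" by simp
    have "(\<chi> i j. (-1 / qf Q w w') * (\<chi> i j. (- qf Q w w') * wedge Q u1 u2 $ i $ j) $ i $ j) \<in> H"
      using H M unfolding lie_subalg_def by blast
    moreover have "(\<chi> i j. (-1 / qf Q w w') * (\<chi> i j. (- qf Q w w') * wedge Q u1 u2 $ i $ j) $ i $ j)
        = wedge Q u1 u2"
      using nz by (simp add: vec_eq_iff)
    ultimately show ?thesis by simp
  qed
  show ?thesis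
  proof (cases "qf Q u1 u2 = 0")
    case True
    let ?A = "perp Q {l1,u1,u2}" let ?B = "perp Q {l2,u1,u2}"
    have ex: "\<exists>w\<in>?A. \<exists>w'\<in>?B. qf Q w w' \<noteq> 0"
    proof (rule ccontr)
      assume "\<not> ?thesis"
      then have all: "\<forall>w\<in>?A. \<forall>w'\<in>?B. qf Q w w' = 0" by blast
      have sub: "?A \<subseteq> perp Q ?B"
      proof
        fix w assume wA: "w \<in> ?A"
        show "w \<in> perp Q ?B"
        proof (rule perpI)
          fix s assume "s \<in> ?B"
          then have "qf Q w s = 0" using all wA by blast
          then show "qf Q s w = 0" using qs[of s w] by simp
        qed
      qed
      have dA: "CARD('n) \<le> vec.dim ?A + 3"
        using LB_univ[of "{l1,u1,u2}" Q] card3[of l1 u1 u2] by simp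
      have dB: "CARD('n) \<le> vec.dim ?B + 3"
        using LB_univ[of "{l2,u1,u2}" Q] card3[of l2 u1 u2] by simp
      have U: "vec.dim (perp Q ?B) + vec.dim ?B \<le> CARD('n)" by (rule UB_set[OF nd])
      have "vec.dim ?A \<le> vec.dim (perp Q ?B)" using sub by (rule vec.dim_subset)
      with assms(1) dA dB U show False by linarith
    qed
    then obtain w w' where w: "w \<in> ?A" and w': "w' \<in> ?B" and nz: "qf Q w w' \<noteq> 0" by blast
    show ?thesis by (rule final[OF w w' _ nz]) (use True in blast)
  next
    case False
    let ?S = "perp Q {l1,u1,l2,u2}"
    have subS: "vec.subspace ?S" by (rule perp_subspace)
    have ex: "\<exists>w\<in>?S. qf Q w w \<noteq> 0"
    proof (rule ccontr)
      assume "\<not> ?thesis"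
      then have iso0: "\<forall>w\<in>?S. qf Q w w = 0" by blast
      have iso: "qf Q x y = 0" if xy: "x \<in> ?S" "y \<in> ?S" for x y
      proof -
        have "x + y \<in> ?S" using subS xy by (simp add: vec.subspace_add)
        then have "qf Q (x+y) (x+y) = 0" using iso0 by blast
        then have "qf Q x x + qf Q y x + (qf Q x y + qf Q y y) = 0"
          by (simp only: qf_add_left qf_add_right)
        moreover have "qf Q x x = 0" "qf Q y y = 0" using iso0 xy by auto
        moreover have "qf Q y x = qf Q x y" by (rule qs)
        ultimately have "2 * qf Q x y = 0" by simp
        then show ?thesis by simp
      qed
      let ?T = "vec.span {u1,u2}"
      have u1S: "u1 \<in> perp Q ?S"
      proof (rule perpI)
        fix s assume "s \<in> ?S"
        then have "qf Q u1 s = 0" by (rule perpD) simp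
        then show "qf Q s u1 = 0" using qs[of s u1] by simp
      qed
      have u2S: "u2 \<in> perp Q ?S"
      proof (rule perpI)
        fix s assume "s \<in> ?S"
        then have "qf Q u2 s = 0" by (rule perpD) simp
        then show "qf Q s u2 = 0" using qs[of s u2] by simp
      qed
      have SS: "?S \<subseteq> perp Q ?S" using iso by (auto intro: perpI)
      have TS: "?T \<subseteq> perp Q ?S"
        using u1S u2S perp_subspace by (intro vec.span_minimal) auto
      have sum_sub: "{x + y |x y. x \<in> ?S \<and> y \<in> ?T} \<subseteq> perp Q ?S"
      proof
        fix z assume "z \<in> {x + y |x y. x \<in> ?S \<and> y \<in> ?T}"
        then obtain x y where z: "z = x + y" "x \<in> ?S" "y \<in> ?T" by blast
        then have "x \<in> perp Q ?S" "y \<in> perp Q ?S" using SS TS by auto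
        then show "z \<in> perp Q ?S" using z(1) perp_subspace vec.subspace_add by blast
      qed
      have int: "?S \<inter> ?T = {0}"
      proof
        show "{0} \<subseteq> ?S \<inter> ?T" using subS vec.subspace_0 vec.span_zero by auto
        show "?S \<inter> ?T \<subseteq> {0}"
        proof
          fix x assume x: "x \<in> ?S \<inter> ?T"
          then obtain k where "x - k *s u1 \<in> vec.span {u2}"
            unfolding vec.span_insert by blast
          then obtain t where "x - k *s u1 = t *s u2" unfolding vec.span_singleton by blast
          then have xe: "x = k *s u1 + t *s u2" by (simp add: algebra_simps)
          have a: "qf Q u1 x = 0" using x by (auto simp: perp_def)
          have b: "qf Q u2 x = 0" using x by (auto simp: perp_def)
          have "qf Q u1 x = t * qf Q u1 u2"
            unfolding xe by (simp add: qf_add_right qf_scale_right assms(7))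
          with a False have t: "t = 0" by simp
          have "qf Q u2 x = k * qf Q u1 u2"
            unfolding xe by (simp add: qf_add_right qf_scale_right assms(11) qs[of u2 u1])
          with b False have k: "k = 0" by simp
          show "x \<in> {0}" using xe t k by simp
        qed
      qed
      have nsp: "u1 \<notin> vec.span {u2}"
      proof
        assume "u1 \<in> vec.span {u2}"
        then obtain t where "u1 = t *s u2" unfolding vec.span_singleton by blast
        then have "qf Q u1 u2 = 0" by (simp add: qf_scale_left assms(11))
        with False show False by simp
      qed
      have dT: "vec.dim ?T = 2"
        using nsp assms(9) by (simp add: vec.dim_insert)
      have "vec.dim {x + y |x y. x \<in> ?S \<and> y \<in> ?T} + vec.dim (?S \<inter> ?T) = vec.dim ?S + vec.dim ?T"
        by (rule vec.dim_sums_Int[OF subS vec.subspace_span])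
      moreover have "vec.dim (?S \<inter> ?T) = 0" using int by simp
      moreover have "vec.dim {x + y |x y. x \<in> ?S \<and> y \<in> ?T} \<le> vec.dim (perp Q ?S)"
        using sum_sub by (rule vec.dim_subset)
      moreover have "vec.dim (perp Q ?S) + vec.dim ?S \<le> CARD('n)" by (rule UB_set[OF nd])
      moreover have "CARD('n) \<le> vec.dim ?S + 4"
        using LB_univ[of "{l1,u1,l2,u2}" Q] card4[of l1 u1 l2 u2] by simp
      ultimately show False using dT assms(1) by linarith
    qed
    then obtain w where w: "w \<in> ?S" and nz: "qf Q w w \<noteq> 0" by blast
    have w1: "w \<in> perp Q {l1,u1,u2}" using w by (auto simp: perp_def)
    have w2: "w \<in> perp Q {l2,u1,u2}" using w by (auto simp: perp_def)
    show ?thesis by (rule final[OF w1 w2 _ nz]) simp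
  qed
qed

end
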